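(* Let $J-CI=L^{(1)}\cdots L^{(p)}U$ be a Darboux factorization, and for $j=0,\ldots,p-1$ let $g^{(j)}_{k,s}$ be the entries (rows and columns indexed by $1,2,\ldots$) of $G^{(j)}=L^{(j+2)}\cdots L^{(p)}UL^{(1)}\cdots L^{(j)}$ (empty products being the identity). For each $j=0,1,\ldots,p$ let $\{\mathcal{L}^{(j)}_n\}$ be the dual sequence of $\{P^{(j)}_n\}$, with $\mathcal{L}^{(0)}_n=\mathcal{L}_n$ and $\mathcal{L}^{(j)}_{-1}:=0$. Then for each $j=0,\ldots,p-1$ and $n=0,1,\ldots$: $$\mathcal{L}^{(j+1)}_n=\mathcal{L}^{(j)}_n+\gamma_{n(p+1)+j+2}\,\mathcal{L}^{(j)}_{n+1},$$ $$(z-C)\mathcal{L}^{(j)}_n=\mathcal{L}^{(j+1)}_{n-1}+\sum_{s=0}^{p-1}g^{(j)}_{n+s+1,n+1}\,\mathcal{L}^{(j+1)}_{n+s},$$ and, for all $n\ge0$, $$(z-C)\mathcal{L}_n=\mathcal{L}^{(p)}_{n-1}-\frac{P_{n+1}(C)}{P_n(C)}\mathcal{L}^{(p)}_n.$$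
   Context: Fix $p\in\mathbb{N}$. Let $J=(a_{n,m})_{n,m\ge0}$ be an infinite matrix with $a_{n,n+1}=1$, $a_{n,m}=0$ for $m>n+1$ or $m<n-p$, and $a_{n+p,n}\neq0$ for all $n\ge0$. Define polynomials by $P_{-p}=\cdots=P_{-1}=0$, $P_0\equiv1$, $P_{n+1}(z)=(z-a_{n,n})P_n(z)-\sum_{i=1}^p a_{n,n-i}P_{n-i}(z)$ for $n\ge0$. Fix $C\in\mathbb{C}$ with $P_n(C)\neq0$ for all $n\ge1$. A Darboux factorization of $J-CI$ is a factorization $J-CI=L^{(1)}L^{(2)}\cdots L^{(p)}U$ where, indexing rows and columns by $1,2,\ldots$, $U$ is upper bidiagonal with $U_{k,k}=\gamma_{(k-1)(p+1)+1}$, $U_{k,k+1}=1$, and for $j=1,\ldots,p$, $L^{(j)}$ is lower bidiagonal with ones on the diagonal and $L^{(j)}_{k+1,k}=\gamma_{(k-1)(p+1)+j+1}\neq0$ for all $k\ge1$ (the $\gamma_i$ being complex numbers). Its Darboux transformations are $J^{(j)}=CI+L^{(j+1)}\cdots L^{(p)}UL^{(1)}\cdots L^{(j)}$, $j=1,\ldots,p$; also $J^{(0)}:=J$. Each $J^{(j)}$ is lower Hessenberg with ones on the superdiagonal, and $\{P^{(j)}_n\}_{n\ge0}$ denotes the unique sequence of polynomials with $P^{(j)}_0\equiv1$ such that $v^{(j)}(z)=(P^{(j)}_0(z),P^{(j)}_1(z),\ldots)^T$ satisfies $J^{(j)}v^{(j)}(z)=zv^{(j)}(z)$; $P^{(0)}_n=P_n$.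 For a sequence of polynomials $\{Q_n\}$ with $\deg Q_n=n$, its dual sequence is the sequence of linear functionals $\{\mathcal{M}_n\}$ on the polynomial space with $\mathcal{M}_j[Q_i]=\delta_{i,j}$. For a functional $\mu$, $(z-C)\mu$ is the functional $q\mapsto\mu[(z-C)q]$. *)

theory Defs
  imports Complex_Main "HOL-Computational_Algebra.Polynomial"
begin

text \<open>Infinite matrices, rows and columns indexed by 0,1,2,... (paper index k = our index k-1).\<close>
type_synonym imat = "nat \<Rightarrow> nat \<Rightarrow> complex"

definition ident :: imat where
  "ident i k = (if i = k then 1 else 0)"

text \<open>Product of row-finite infinite matrices (the sum has finite support in all uses).\<close>
definition mmult :: "imat \<Rightarrow> imat \<Rightarrow> imat" where
  "mmult A B i k = (\<Sum>j. A i j * B j k)"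

definition mprod :: "imat list \<Rightarrow> imat" where
  "mprod Ms = foldr mmult Ms ident"

text \<open>Paper: U_{k,k} = gamma_{(k-1)(p+1)+1}, U_{k,k+1} = 1;
  L^{(j)}_{k,k} = 1, L^{(j)}_{k+1,k} = gamma_{(k-1)(p+1)+j+1}.\<close>
definition Umat :: "nat \<Rightarrow> (nat \<Rightarrow> complex) \<Rightarrow> imat" where
  "Umat p \<gamma> i k = (if k = i then \<gamma> (i*(p+1)+1) else if k = i + 1 then 1 else 0)"

definition Lmat :: "nat \<Rightarrow> (nat \<Rightarrow> complex) \<Rightarrow> nat \<Rightarrow> imat" where
  "Lmat p \<gamma> j i k = (if i = k then 1 else if i = k + 1 then \<gamma> (k*(p+1)+j+1) else 0)"

definition Lprod :: "nat \<Rightarrow> (nat \<Rightarrow> complex) \<Rightarrow> nat \<Rightarrow> nat \<Rightarrow> imat" where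
  "Lprod p \<gamma> a b = mprod (map (Lmat p \<gamma>) [a..<b+1])"

definition darboux_factorization ::
  "nat \<Rightarrow> imat \<Rightarrow> complex \<Rightarrow> (nat \<Rightarrow> complex) \<Rightarrow> bool" where
  "darboux_factorization p J C \<gamma> \<longleftrightarrow>
     (\<forall>j\<in>{1..p}. \<forall>k. \<gamma> (k*(p+1)+j+1) \<noteq> 0) \<and>
     (\<lambda>i k. J i k - C * ident i k) = mmult (Lprod p \<gamma> 1 p) (Umat p \<gamma>)"

definition darboux_trans :: "nat \<Rightarrow> imat \<Rightarrow> complex \<Rightarrow> (nat \<Rightarrow> complex) \<Rightarrow> nat \<Rightarrow> imat" where
  "darboux_trans p J C \<gamma> j =
     (if j = 0 then J
      else (\<lambda>i k. C * ident i k +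
              mmult (mmult (Lprod p \<gamma> (j+1) p) (Umat p \<gamma>)) (Lprod p \<gamma> 1 j) i k))"

definition Gmat :: "nat \<Rightarrow> (nat \<Rightarrow> complex) \<Rightarrow> nat \<Rightarrow> imat" where
  "Gmat p \<gamma> j = mmult (mmult (Lprod p \<gamma> (j+2) p) (Umat p \<gamma>)) (Lprod p \<gamma> 1 j)"

text \<open>For a lower Hessenberg matrix A with ones on the superdiagonal, the polynomials with
  Q_0 = 1 and A (Q_0,Q_1,...)^T = z (Q_0,Q_1,...)^T, i.e. row n reads
  sum_{m<=n} A_{n,m} Q_m + Q_{n+1} = z Q_n.\<close>
fun hess_list :: "imat \<Rightarrow> nat \<Rightarrow> complex poly list" where
  "hess_list A 0 = [1]"
| "hess_list A (Suc n) = (let xs = hess_list A n in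
      xs @ [[:0, 1:] * xs ! n - (\<Sum>m\<le>n. smult (A n m) (xs ! m))])"

definition hess_poly :: "imat \<Rightarrow> nat \<Rightarrow> complex poly" where
  "hess_poly A n = hess_list A n ! n"

definition lin_functional :: "(complex poly \<Rightarrow> complex) \<Rightarrow> bool" where
  "lin_functional M \<longleftrightarrow> (\<forall>p q. M (p + q) = M p + M q) \<and> (\<forall>c p. M (smult c p) = c * M p)"

definition dual_seq :: "(nat \<Rightarrow> complex poly) \<Rightarrow> nat \<Rightarrow> (complex poly \<Rightarrow> complex)" where
  "dual_seq Q = (THE M. (\<forall>n. lin_functional (M n)) \<and>
                        (\<forall>i j. M j (Q i) = (if i = j then 1 else 0)))"

definition shift_fun :: "complex \<Rightarrow> (complex poly \<Rightarrow> complex) \<Rightarrow> (complex poly \<Rightarrow> complex)" where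
  "shift_fun C \<mu> = (\<lambda>q. \<mu> ([:-C, 1:] * q))"

end

theory Submission
  imports Defs
begin

definition ub :: "nat \<Rightarrow> imat \<Rightarrow> bool" where
  "ub a A \<longleftrightarrow> (\<forall>i k. i + a < k \<longrightarrow> A i k = 0)"
definition lb :: "nat \<Rightarrow> imat \<Rightarrow> bool" where
  "lb a A \<longleftrightarrow> (\<forall>i k. k + a < i \<longrightarrow> A i k = 0)"

lemma ubD: "ub a A \<Longrightarrow> i + a < k \<Longrightarrow> A i k = 0" by (simp add: ub_def)
lemma lbD: "lb a A \<Longrightarrow> k + a < i \<Longrightarrow> A i k = 0" by (simp add: lb_def)

lemma mmult_ub: assumes "ub a A" shows "mmult A B i k = (\<Sum>l\<le>i+a. A i l * B l k)"
  unfolding mmult_def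
  by (rule suminf_finite) (use assms in \<open>auto simp: ub_def\<close>)

lemma sum_swap_band:
  fixes f :: "nat \<Rightarrow> nat \<Rightarrow> 'a::comm_monoid_add"
  assumes "\<And>j l. l > j + b \<Longrightarrow> f j l = 0"
  shows "(\<Sum>l\<le>N+b. \<Sum>j\<le>N. f j l) = (\<Sum>j\<le>N. \<Sum>l\<le>j+b. f j l)"
proof -
  have "(\<Sum>l\<le>N+b. \<Sum>j\<le>N. f j l) = (\<Sum>j\<le>N. \<Sum>l\<le>N+b. f j l)" by (rule sum.swap)
  also have "\<dots> = (\<Sum>j\<le>N. \<Sum>l\<le>j+b. f j l)"
  proof (rule sum.cong[OF refl])
    fix j assume "j \<in> {..N}"
    then show "(\<Sum>l\<le>N+b. f j l) = (\<Sum>l\<le>j+b. f j l)"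
      by (intro sum.mono_neutral_right) (auto intro: assms)
  qed
  finally show ?thesis .
qed

lemma ub_mult: assumes "ub a A" "ub b B" shows "ub (a+b) (mmult A B)"
  unfolding ub_def
proof (intro allI impI)
  fix i k assume "i + (a+b) < k"
  then show "mmult A B i k = 0" using assms(2)
    by (auto simp: mmult_ub[OF assms(1)] ub_def intro!: sum.neutral)
qed

lemma lb_mult: assumes "ub c A" "lb a A" "lb b B" shows "lb (a+b) (mmult A B)"
  unfolding lb_def
proof (intro allI impI)
  fix i k assume h: "k + (a+b) < i"
  show "mmult A B i k = 0" unfolding mmult_ub[OF assms(1)]
  proof (intro sum.neutral ballI)
    fix l assume "l \<in> {..i+c}"
    show "A i l * B l k = 0"
    proof (cases "l + a < i")
      case True then show ?thesis using assms(2) by (simp add: lb_def)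
    next
      case False then have "k + b < l" using h by linarith
      then show ?thesis using assms(3) by (simp add: lb_def)
    qed
  qed
qed

lemma mmult_assoc: assumes "ub a A" "ub b B"
  shows "mmult (mmult A B) D = mmult A (mmult B D)"
proof (intro ext)
  fix i k
  have "mmult (mmult A B) D i k = (\<Sum>l\<le>i+a+b. (\<Sum>j\<le>i+a. A i j * B j l) * D l k)"
    using mmult_ub[OF ub_mult[OF assms]] mmult_ub[OF assms(1)] by (simp add: add.assoc)
  also have "\<dots> = (\<Sum>l\<le>i+a+b. \<Sum>j\<le>i+a. A i j * B j l * D l k)"
    by (simp add: sum_distrib_right)
  also have "\<dots> = (\<Sum>j\<le>i+a. \<Sum>l\<le>j+b. A i j * B j l * D l k)"
    by (rule sum_swap_band) (use assms(2) in \<open>auto simp: ub_def\<close>)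
  also have "\<dots> = mmult A (mmult B D) i k"
    by (simp add: mmult_ub[OF assms(1)] mmult_ub[OF assms(2)] sum_distrib_left mult.assoc)
  finally show "mmult (mmult A B) D i k = mmult A (mmult B D) i k" .
qed

lemma mmult_ident_right[simp]: "mmult A ident = A"
proof (intro ext)
  fix i k show "mmult A ident i k = A i k"
    unfolding mmult_def
    by (subst suminf_finite[of "{k}"]) (auto simp: ident_def)
qed

lemma mmult_ident_left[simp]: "mmult ident A = A"
proof (intro ext)
  fix i k show "mmult ident A i k = A i k"
    unfolding mmult_def
    by (subst suminf_finite[of "{i}"]) (auto simp: ident_def)
qed

lemma ub_ident: "ub 0 ident" and lb_ident: "lb 0 ident"
  by (auto simp: ub_def lb_def ident_def)

lemma diag_mult: assumes "ub 0 M" "ub 0 N" shows "mmult M N i i = M i i * N i i"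
proof -
  have "mmult M N i i = (\<Sum>l\<le>i. M i l * N l i)" using mmult_ub[OF assms(1)] by simp
  also have "\<dots> = M i i * N i i"
    by (subst sum.remove[of _ i]) (auto intro!: sum.neutral simp: ubD[OF assms(2)])
  finally show ?thesis .
qed

lemma sd_left: assumes "ub 0 M" "ub 1 X" shows "mmult M X i (i+1) = M i i * X i (i+1)"
proof -
  have "mmult M X i (i+1) = (\<Sum>l\<le>i. M i l * X l (i+1))" using mmult_ub[OF assms(1)] by simp
  also have "\<dots> = M i i * X i (i+1)"
    by (subst sum.remove[of _ i]) (auto intro!: sum.neutral simp: ubD[OF assms(2)])
  finally show ?thesis .
qed

lemma sd_right: assumes "ub 1 X" "ub 0 M" shows "mmult X M i (i+1) = X i (i+1) * M (i+1) (i+1)"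
proof -
  have "mmult X M i (i+1) = (\<Sum>l\<le>i+1. X i l * M l (i+1))" using mmult_ub[OF assms(1)] by simp
  also have "\<dots> = X i (i+1) * M (i+1) (i+1)"
    by (subst sum.remove[of _ "i+1"]) (auto intro!: sum.neutral simp: ubD[OF assms(2)])
  finally show ?thesis .
qed

lemma mprod_snoc: assumes "\<forall>M\<in>set xs. ub 0 M"
  shows "mprod (xs @ [x]) = mmult (mprod xs) x"
  using assms
proof (induction xs)
  case Nil then show ?case by (simp add: mprod_def)
next
  case (Cons y ys)
  have u: "ub 0 (mprod ys)" using Cons.prems
  proof (induction ys)
    case Nil then show ?case by (simp add: mprod_def ub_ident)
  next
    case (Cons z zs) then show ?case using ub_mult[of 0 z 0 "mprod zs"] by (simp add: mprod_def)
  qed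
  have "mprod ((y#ys) @ [x]) = mmult y (mmult (mprod ys) x)"
    using Cons by (simp add: mprod_def)
  also have "\<dots> = mmult (mmult y (mprod ys)) x"
    using mmult_assoc[of 0 y 0 "mprod ys" x] Cons.prems u by simp
  finally show ?case by (simp add: mprod_def)
qed


lemma smult_sum_right: "smult a (\<Sum>i\<in>S. f i) = (\<Sum>i\<in>S. smult a (f i))"
  by (induct S rule: infinite_finite_induct) (auto simp: smult_add_right)

definition mv :: "nat \<Rightarrow> imat \<Rightarrow> (nat \<Rightarrow> complex poly) \<Rightarrow> nat \<Rightarrow> complex poly" where
  "mv b A v i = (\<Sum>m\<le>i+b. smult (A i m) (v m))"

lemma mv_mult: assumes "ub a A" "ub b B"
  shows "mv (a+b) (mmult A B) v = mv a A (mv b B v)"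
proof (intro ext)
  fix i
  have "mv (a+b) (mmult A B) v i = (\<Sum>m\<le>i+a+b. \<Sum>l\<le>i+a. smult (A i l * B l m) (v m))"
    unfolding mv_def using mmult_ub[OF assms(1)] by (simp add: add.assoc smult_sum)
  also have "\<dots> = (\<Sum>l\<le>i+a. \<Sum>m\<le>l+b. smult (A i l * B l m) (v m))"
    by (rule sum_swap_band) (use assms(2) in \<open>auto simp: ub_def\<close>)
  also have "\<dots> = mv a A (mv b B v) i"
    by (simp add: mv_def smult_sum_right)
  finally show "mv (a+b) (mmult A B) v i = mv a A (mv b B v) i" .
qed

lemma mv_mult_poly: "mv b A (\<lambda>i. c * v i) = (\<lambda>i. c * mv b A v i)"
  by (auto simp: mv_def sum_distrib_left)

lemma hess_list_len: "length (hess_list A n) = n + 1"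
  by (induction n) (auto simp: Let_def)

lemma hess_list_nth: "m \<le> n \<Longrightarrow> hess_list A n ! m = hess_poly A m"
proof (induction n)
  case 0 then show ?case by (simp add: hess_poly_def)
next
  case (Suc n)
  show ?case
  proof (cases "m = Suc n")
    case True then show ?thesis by (simp add: hess_poly_def)
  next
    case False then have "m \<le> n" using Suc.prems by simp
    then show ?thesis using Suc.IH hess_list_len[of A n] by (simp add: Let_def nth_append)
  qed
qed

lemma hess_poly_0: "hess_poly A 0 = 1" by (simp add: hess_poly_def)

lemma hess_poly_Suc: "hess_poly A (Suc n) =
   [:0,1:] * hess_poly A n - (\<Sum>m\<le>n. smult (A n m) (hess_poly A m))"
proof -
  have "hess_poly A (Suc n) = [:0, 1:] * hess_list A n ! n - (\<Sum>m\<le>n. smult (A n m) (hess_list A n ! m))"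
    unfolding hess_poly_def using hess_list_len[of A n] by (simp add: Let_def nth_append)
  also have "\<dots> = [:0,1:] * hess_poly A n - (\<Sum>m\<le>n. smult (A n m) (hess_poly A m))"
    by (simp add: hess_list_nth)
  finally show ?thesis .
qed

definition eig :: "complex \<Rightarrow> imat \<Rightarrow> (nat \<Rightarrow> complex poly) \<Rightarrow> bool" where
  "eig C D w \<longleftrightarrow> (\<lambda>n. [:-C,1:] * w n) = mv 1 D w"

lemma hess_step:
  assumes "ub 1 D" "\<forall>n. D n (n+1) = 1"
  shows "(\<Sum>m\<le>n+1. smult (D n m) (w m)) = w (n+1) + (\<Sum>m\<le>n. smult (D n m) (w m))"
  using assms by (simp add: add.commute)

lemma hess_eig:
  assumes "ub 1 D" "\<forall>n. D n (n+1) = 1" "A = (\<lambda>i k. C * ident i k + D i k)"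
  shows "eig C D (hess_poly A)"
  unfolding eig_def
proof (intro ext)
  fix n
  let ?P = "hess_poly A"
  have s: "(\<Sum>m\<le>n. smult (A n m) (?P m)) = smult C (?P n) + (\<Sum>m\<le>n. smult (D n m) (?P m))"
  proof -
    have "(\<Sum>m\<le>n. smult (A n m) (?P m)) = (\<Sum>m\<le>n. smult (C * ident n m) (?P m)) + (\<Sum>m\<le>n. smult (D n m) (?P m))"
      by (simp add: assms(3) smult_add_left sum.distrib)
    moreover have "(\<Sum>m\<le>n. smult (C * ident n m) (?P m)) = (\<Sum>m\<le>n. if m = n then smult C (?P m) else 0)"
      by (rule sum.cong) (auto simp: ident_def)
    ultimately show ?thesis by simp
  qed
  have "mv 1 D ?P n = ?P (n+1) + (\<Sum>m\<le>n. smult (D n m) (?P m))"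
    unfolding mv_def using assms(2) by simp
  also have "\<dots> = [:0,1:] * ?P n - smult C (?P n)"
    using s hess_poly_Suc[of A n] by simp
  also have "\<dots> = [:-C,1:] * ?P n"
    by (simp add: algebra_simps smult_add_left)
  finally show "[:-C,1:] * ?P n = mv 1 D ?P n" by simp
qed


lemma hess_deg_aux: "\<forall>m\<le>n. degree (hess_poly A m) \<le> m \<and> coeff (hess_poly A m) m = 1"
proof (induction n)
  case 0 then show ?case by (simp add: hess_poly_0)
next
  case (Suc n)
  let ?P = "hess_poly A"
  have ds: "degree (\<Sum>m\<le>n. smult (A n m) (?P m)) \<le> n"
    by (rule degree_sum_le) (use Suc.IH in \<open>auto intro: order.trans[OF degree_smult_le]\<close>)
  have x: "[:0,1:] * ?P n = pCons 0 (?P n)" by simp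
  have dx: "degree ([:0,1:] * ?P n) \<le> Suc n" using Suc.IH x
    by (metis degree_pCons_le le_SucE le_refl order.trans pCons_0_0 degree_pCons_eq_if not_less_eq_eq)
  have "degree (?P (Suc n)) \<le> Suc n"
    unfolding hess_poly_Suc using ds dx by (meson degree_diff_le le_Suc_eq)
  moreover have "coeff (?P (Suc n)) (Suc n) = 1"
    unfolding hess_poly_Suc using Suc.IH ds by (simp add: x coeff_eq_0)
  ultimately show ?case using Suc.IH le_Suc_eq by auto
qed

lemma hess_deg: "degree (hess_poly A n) = n" and hess_lead: "coeff (hess_poly A n) n = 1"
  using hess_deg_aux[of n A] by (auto intro!: antisym le_degree)

lemma hess_uniq:
  assumes "ub 1 D" "\<forall>n. D n (n+1) = 1" "A = (\<lambda>i k. C * ident i k + D i k)"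
    and "w 0 = 1" "eig C D w"
  shows "w = hess_poly A"
proof -
  let ?P = "hess_poly A"
  have e2: "eig C D ?P" by (rule hess_eig[OF assms(1-3)])
  have rec: "u (Suc n) = [:-C,1:] * u n - (\<Sum>m\<le>n. smult (D n m) (u m))" if "eig C D u" for u n
  proof -
    have "[:-C,1:] * u n = mv 1 D u n" using that unfolding eig_def by metis
    also have "\<dots> = u (n+1) + (\<Sum>m\<le>n. smult (D n m) (u m))"
      unfolding mv_def using assms(2) by simp
    finally show ?thesis by simp
  qed
  have "\<forall>m\<le>n. w m = ?P m" for n
  proof (induction n)
    case 0 then show ?case using assms(4) by (simp add: hess_poly_0)
  next
    case (Suc n)
    have "w (Suc n) = ?P (Suc n)"
      using rec[OF assms(5), of n] rec[OF e2, of n] Suc.IH by simp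
    then show ?case using Suc.IH le_Suc_eq by auto
  qed
  then show ?thesis by auto
qed

lemma core:
  assumes M0: "ub 0 M" and Md: "\<forall>i. M i i = 1" and X1: "ub 1 X" and Xs: "\<forall>i. X i (i+1) = 1"
    and A: "A = (\<lambda>i k. C * ident i k + mmult M X i k)"
    and B: "B = (\<lambda>i k. C * ident i k + mmult X M i k)"
  shows "hess_poly A = mv 0 M (hess_poly B)"
    and "\<forall>k. [:-C,1:] * hess_poly B k = mv 1 X (hess_poly A) k"
proof -
  have uMX: "ub 1 (mmult M X)" using ub_mult[OF M0 X1] by simp
  have uXM: "ub 1 (mmult X M)" using ub_mult[OF X1 M0] by simp
  have sMX: "\<forall>n. mmult M X n (n+1) = 1" using sd_left[OF M0 X1] Md Xs by simp
  have sXM: "\<forall>n. mmult X M n (n+1) = 1" using sd_right[OF X1 M0] Md Xs by simp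
  let ?v = "hess_poly B"
  let ?w = "mv 0 M ?v"
  have ev: "(\<lambda>n. [:-C,1:] * ?v n) = mv 1 (mmult X M) ?v"
    using hess_eig[OF uXM sXM B] unfolding eig_def .
  have XM: "mv 1 (mmult X M) ?v = mv 1 X ?w" using mv_mult[OF X1 M0] by simp
  have MX: "mv 1 (mmult M X) ?w = mv 0 M (mv 1 X ?w)" using mv_mult[OF M0 X1] by simp
  have "eig C (mmult M X) ?w"
    unfolding eig_def
  proof -
    have "(\<lambda>n. [:-C,1:] * ?w n) = mv 0 M (\<lambda>n. [:-C,1:] * ?v n)"
      using mv_mult_poly[of 0 M "[:-C,1:]" ?v] by simp
    also have "\<dots> = mv 1 (mmult M X) ?w" using ev XM MX by simp
    finally show "(\<lambda>n. [:-C,1:] * ?w n) = mv 1 (mmult M X) ?w" .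
  qed
  moreover have "?w 0 = 1" using Md by (simp add: mv_def hess_poly_0)
  ultimately have wA: "?w = hess_poly A" using hess_uniq[OF uMX sMX A] by simp
  then show "hess_poly A = mv 0 M (hess_poly B)" by simp
  show "\<forall>k. [:-C,1:] * hess_poly B k = mv 1 X (hess_poly A) k"
    using ev XM wA by (metis)
qed


definition basis :: "(nat \<Rightarrow> complex poly) \<Rightarrow> bool" where
  "basis Q \<longleftrightarrow> (\<forall>n. degree (Q n) = n \<and> coeff (Q n) n = 1)"

lemma deg_le_pred: fixes r :: "complex poly"
  assumes "degree r \<le> Suc N" "coeff r (Suc N) = 0" shows "degree r \<le> N"
proof (rule ccontr)
  assume "\<not> degree r \<le> N"
  then have "degree r = Suc N" using assms(1) by simp
  then have "r = 0" using assms(2) by (metis leading_coeff_0_iff)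
  then show False using \<open>degree r = Suc N\<close> by simp
qed

lemma span:
  assumes "basis Q"
  shows "degree q \<le> N \<Longrightarrow> \<exists>c. q = (\<Sum>i\<le>N. smult (c i) (Q i))"
proof (induction N arbitrary: q)
  case 0
  have "degree (Q 0) = 0" "coeff (Q 0) 0 = 1" using assms by (auto simp: basis_def)
  then have "Q 0 = 1" by (metis degree_0_id one_pCons)
  moreover have "q = [:coeff q 0:]" using 0 by (metis degree_0_id le_0_eq)
  ultimately show ?case by (intro exI[of _ "\<lambda>_. coeff q 0"]) simp
next
  case (Suc N)
  define r where "r = q - smult (coeff q (Suc N)) (Q (Suc N))"
  have dQ: "degree (Q (Suc N)) = Suc N" "coeff (Q (Suc N)) (Suc N) = 1"
    using assms by (auto simp: basis_def)
  have "degree r \<le> Suc N" unfolding r_def using Suc.prems dQ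
    by (metis degree_diff_le degree_smult_le order.trans)
  moreover have "coeff r (Suc N) = 0" unfolding r_def using dQ by simp
  ultimately have "degree r \<le> N" by (rule deg_le_pred)
  then obtain c where c: "r = (\<Sum>i\<le>N. smult (c i) (Q i))" using Suc.IH by blast
  define c' where "c' = c(Suc N := coeff q (Suc N))"
  have "(\<Sum>i\<le>Suc N. smult (c' i) (Q i)) = (\<Sum>i\<le>N. smult (c i) (Q i)) + smult (coeff q (Suc N)) (Q (Suc N))"
    by (simp add: c'_def)
  also have "\<dots> = q" using c r_def by (metis diff_add_cancel)
  finally show ?case by metis
qed

lemma indep:
  assumes "basis Q"
  shows "(\<Sum>i\<le>N. smult (d i) (Q i)) = 0 \<Longrightarrow> \<forall>i\<le>N. d i = 0"
proof (induction N)
  case 0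
  have "coeff (Q 0) 0 = 1" using assms by (auto simp: basis_def)
  moreover have "smult (d 0) (Q 0) = 0" using 0 by simp
  then have "coeff (smult (d 0) (Q 0)) 0 = 0" by (metis coeff_0)
  ultimately show ?case by (simp only: coeff_smult) simp
next
  case (Suc N)
  have dS: "degree (\<Sum>i\<le>N. smult (d i) (Q i)) \<le> N"
    by (rule degree_sum_le) (use assms in \<open>auto simp: basis_def intro: order.trans[OF degree_smult_le]\<close>)
  have e: "(\<Sum>i\<le>N. smult (d i) (Q i)) + smult (d (Suc N)) (Q (Suc N)) = 0"
    using Suc.prems by simp
  then have "coeff ((\<Sum>i\<le>N. smult (d i) (Q i)) + smult (d (Suc N)) (Q (Suc N))) (Suc N) = 0"
    by simp
  moreover have c1: "coeff (\<Sum>i\<le>N. smult (d i) (Q i)) (Suc N) = 0" using dS by (simp add: coeff_eq_0)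
  moreover have c2: "coeff (Q (Suc N)) (Suc N) = 1" using assms by (simp add: basis_def)
  ultimately have "d (Suc N) = 0" by (simp only: coeff_add coeff_smult) simp
  then show ?case using Suc.IH e le_Suc_eq by auto
qed

definition crd :: "(nat \<Rightarrow> complex poly) \<Rightarrow> complex poly \<Rightarrow> nat \<Rightarrow> complex" where
  "crd Q q = (SOME c. (\<forall>i>degree q. c i = 0) \<and> q = (\<Sum>i\<le>degree q. smult (c i) (Q i)))"

lemma crd_spec:
  assumes "basis Q"
  shows "(\<forall>i>degree q. crd Q q i = 0) \<and> q = (\<Sum>i\<le>degree q. smult (crd Q q i) (Q i))"
proof -
  obtain c0 where c0: "q = (\<Sum>i\<le>degree q. smult (c0 i) (Q i))" using span[OF assms] by blast
  define c1 where "c1 = (\<lambda>i. if i \<le> degree q then c0 i else 0)"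
  have "q = (\<Sum>i\<le>degree q. smult (c1 i) (Q i))" using c0 unfolding c1_def by simp
  moreover have "\<forall>i>degree q. c1 i = 0" unfolding c1_def by simp
  ultimately have "\<exists>c. (\<forall>i>degree q. c i = 0) \<and> q = (\<Sum>i\<le>degree q. smult (c i) (Q i))"
    by blast
  then show ?thesis unfolding crd_def by (rule someI_ex)
qed

lemma crd_ext:
  assumes "basis Q" "degree q \<le> N"
  shows "q = (\<Sum>i\<le>N. smult (crd Q q i) (Q i))"
proof -
  have s: "q = (\<Sum>i\<le>degree q. smult (crd Q q i) (Q i))" "\<forall>i>degree q. crd Q q i = 0"
    using crd_spec[OF assms(1)] by auto
  have "(\<Sum>i\<le>degree q. smult (crd Q q i) (Q i)) = (\<Sum>i\<le>N. smult (crd Q q i) (Q i))"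
    by (rule sum.mono_neutral_left) (use assms(2) s(2) in auto)
  then show ?thesis using s(1) by simp
qed

lemma crd_unique:
  assumes b: "basis Q" and z: "\<forall>i>N. c i = 0" and q: "q = (\<Sum>i\<le>N. smult (c i) (Q i))"
  shows "crd Q q = c"
proof -
  have dq: "degree q \<le> N" unfolding q
    by (rule degree_sum_le) (use b in \<open>auto simp: basis_def intro: order.trans[OF degree_smult_le]\<close>)
  have e: "q = (\<Sum>i\<le>N. smult (crd Q q i) (Q i))" by (rule crd_ext[OF b dq])
  have "(\<Sum>i\<le>N. smult (c i - crd Q q i) (Q i)) = 0"
    using q e by (simp add: smult_diff_left sum_subtractf)
  then have "\<forall>i\<le>N. c i - crd Q q i = 0" by (rule indep[OF b])
  moreover have "\<forall>i>N. crd Q q i = 0" using crd_spec[OF b, of q] dq by auto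
  ultimately show ?thesis
  proof (intro ext)
    fix i show "crd Q q i = c i"
      using \<open>\<forall>i\<le>N. c i - crd Q q i = 0\<close> \<open>\<forall>i>N. crd Q q i = 0\<close> z
      by (cases "i \<le> N") auto
  qed
qed

lemma crd_add: assumes b: "basis Q" shows "crd Q (p + q) = (\<lambda>i. crd Q p i + crd Q q i)"
proof (rule crd_unique[OF b, where N="max (degree p) (degree q)"])
  show "\<forall>i>max (degree p) (degree q). crd Q p i + crd Q q i = 0" using crd_spec[OF b] by simp
  have "p = (\<Sum>i\<le>max (degree p) (degree q). smult (crd Q p i) (Q i))"
       "q = (\<Sum>i\<le>max (degree p) (degree q). smult (crd Q q i) (Q i))"
    by (rule crd_ext[OF b]; simp)+
  then show "p + q = (\<Sum>i\<le>max (degree p) (degree q). smult (crd Q p i + crd Q q i) (Q i))"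
    by (simp add: smult_add_left sum.distrib)
qed

lemma crd_smult: assumes b: "basis Q" shows "crd Q (smult a q) = (\<lambda>i. a * crd Q q i)"
proof (rule crd_unique[OF b, where N="degree q"])
  show "\<forall>i>degree q. a * crd Q q i = 0" using crd_spec[OF b] by simp
  have "q = (\<Sum>i\<le>degree q. smult (crd Q q i) (Q i))" using crd_spec[OF b] by blast
  then have "smult a q = smult a (\<Sum>i\<le>degree q. smult (crd Q q i) (Q i))" by (rule arg_cong)
  also have "\<dots> = (\<Sum>i\<le>degree q. smult (a * crd Q q i) (Q i))" by (simp add: smult_sum_right)
  finally show "smult a q = (\<Sum>i\<le>degree q. smult (a * crd Q q i) (Q i))" .
qed

lemma crd_basis: assumes b: "basis Q" shows "crd Q (Q n) = (\<lambda>k. if k = n then 1 else 0)"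
proof (rule crd_unique[OF b, where N=n])
  show "\<forall>i>n. (if i = n then 1 else 0) = 0" by simp
  have "(\<Sum>i\<le>n. smult (if i = n then 1 else 0) (Q i)) = (\<Sum>i\<le>n. if i = n then Q i else 0)"
    by (rule sum.cong) auto
  then show "Q n = (\<Sum>i\<le>n. smult (if i = n then 1 else 0) (Q i))" by simp
qed

lemma lin_zero: "lin_functional M \<Longrightarrow> M 0 = 0"
  unfolding lin_functional_def by (metis mult_zero_left smult_0_left)

lemma lin_sum: "lin_functional M \<Longrightarrow> M (\<Sum>i\<in>S. f i) = (\<Sum>i\<in>S. M (f i))"
  by (induct S rule: infinite_finite_induct) (auto simp: lin_zero lin_functional_def)

lemma lin_ext:
  assumes b: "basis Q" and l: "lin_functional M" "lin_functional M'" and e: "\<And>i. M (Q i) = M' (Q i)"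
  shows "M = M'"
proof
  fix q
  have r: "q = (\<Sum>i\<le>degree q. smult (crd Q q i) (Q i))" using crd_spec[OF b] by blast
  have "M q = (\<Sum>i\<le>degree q. crd Q q i * M (Q i))"
    by (subst r, simp add: lin_sum[OF l(1)]) (use l(1) in \<open>simp add: lin_functional_def\<close>)
  moreover have "M' q = (\<Sum>i\<le>degree q. crd Q q i * M' (Q i))"
    by (subst r, simp add: lin_sum[OF l(2)]) (use l(2) in \<open>simp add: lin_functional_def\<close>)
  ultimately show "M q = M' q" using e by simp
qed

lemma dual_props:
  assumes b: "basis Q"
  shows "lin_functional (dual_seq Q n)" and "dual_seq Q j (Q i) = (if i = j then 1 else 0)"
proof -
  let ?P = "\<lambda>M. (\<forall>n. lin_functional (M n)) \<and> (\<forall>i j. M j (Q i) = (if i = j then 1 else 0))"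
  have ex: "?P (\<lambda>n q. crd Q q n)"
    by (auto simp: lin_functional_def crd_add[OF b] crd_smult[OF b] crd_basis[OF b])
  have un: "M = (\<lambda>n q. crd Q q n)" if "?P M" for M
  proof
    fix n show "M n = (\<lambda>q. crd Q q n)"
      by (rule lin_ext[OF b]) (use that ex in auto)
  qed
  have "?P (dual_seq Q)" unfolding dual_seq_def
    by (rule theI[of ?P, OF ex]) (use un in blast)
  then show "lin_functional (dual_seq Q n)" "dual_seq Q j (Q i) = (if i = j then 1 else 0)" by auto
qed

lemma basis_hess: "basis (hess_poly A)"
  by (simp add: basis_def hess_deg hess_lead)


lemma lb_mono: "lb a A \<Longrightarrow> a \<le> b \<Longrightarrow> lb b A" by (auto simp: lb_def)
lemma ub_mono: "ub a A \<Longrightarrow> a \<le> b \<Longrightarrow> ub b A" by (auto simp: ub_def)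

lemma L_ub: "ub 0 (Lmat p \<gamma> j)" and L_lb: "lb 1 (Lmat p \<gamma> j)" and L_d: "Lmat p \<gamma> j i i = 1"
  by (auto simp: ub_def lb_def Lmat_def)

lemma U_ub: "ub 1 (Umat p \<gamma>)" and U_lb: "lb 0 (Umat p \<gamma>)" and U_s: "Umat p \<gamma> i (i+1) = 1"
  by (auto simp: ub_def lb_def Umat_def)

lemma mprod_props:
  assumes "\<forall>M\<in>set xs. ub 0 M \<and> lb 1 M \<and> (\<forall>i. M i i = 1)"
  shows "ub 0 (mprod xs) \<and> lb (length xs) (mprod xs) \<and> (\<forall>i. mprod xs i i = 1)"
  using assms
proof (induction xs)
  case Nil then show ?case by (simp add: mprod_def ub_ident lb_ident) (simp add: ident_def)
next
  case (Cons x xs)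
  have m: "mprod (x#xs) = mmult x (mprod xs)" by (simp add: mprod_def)
  have hx: "ub 0 x" "lb 1 x" "\<forall>i. x i i = 1" using Cons.prems by auto
  have ih: "ub 0 (mprod xs)" "lb (length xs) (mprod xs)" "\<forall>i. mprod xs i i = 1" using Cons by auto
  show ?case unfolding m
    using ub_mult[OF hx(1) ih(1)] lb_mult[OF hx(1) hx(2) ih(2)] diag_mult[OF hx(1) ih(1)] hx(3) ih(3)
    by simp
qed

lemma Lprod_props:
  "ub 0 (Lprod p \<gamma> a b) \<and> lb (b+1-a) (Lprod p \<gamma> a b) \<and> (\<forall>i. Lprod p \<gamma> a b i i = 1)"
proof -
  let ?xs = "map (Lmat p \<gamma>) [a..<b+1]"
  have h: "\<forall>M\<in>set ?xs. ub 0 M \<and> lb 1 M \<and> (\<forall>i. M i i = 1)"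
    by (auto simp del: upt_Suc simp: L_ub L_lb L_d L_lb[simplified])
  have l: "length ?xs = b+1-a" by (simp del: upt_Suc)
  show ?thesis unfolding Lprod_def using mprod_props[OF h] l by (simp del: upt_Suc)
qed

lemma Lprod_ub: "ub 0 (Lprod p \<gamma> a b)" and Lprod_d: "Lprod p \<gamma> a b i i = 1"
  using Lprod_props by auto

lemma Lprod_empty: "b < a \<Longrightarrow> Lprod p \<gamma> a b = ident"
  by (simp add: Lprod_def mprod_def)

lemma Lprod_cons: "a \<le> b \<Longrightarrow> Lprod p \<gamma> a b = mmult (Lmat p \<gamma> a) (Lprod p \<gamma> (a+1) b)"
  by (simp add: Lprod_def mprod_def upt_conv_Cons del: upt_Suc)

lemma Lprod_snoc: "Lprod p \<gamma> 1 (j+1) = mmult (Lprod p \<gamma> 1 j) (Lmat p \<gamma> (j+1))"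
proof -
  have "[1..<j+1+1] = [1..<j+1] @ [j+1]" by simp
  then have "Lprod p \<gamma> 1 (j+1) = mprod (map (Lmat p \<gamma>) [1..<j+1] @ [Lmat p \<gamma> (j+1)])"
    by (simp add: Lprod_def)
  also have "\<dots> = mmult (Lprod p \<gamma> 1 j) (Lmat p \<gamma> (j+1))"
    by (subst mprod_snoc) (auto simp: L_ub Lprod_def)
  finally show ?thesis .
qed

definition Dm :: "nat \<Rightarrow> (nat \<Rightarrow> complex) \<Rightarrow> nat \<Rightarrow> imat" where
  "Dm p \<gamma> j = mmult (mmult (Lprod p \<gamma> (j+1) p) (Umat p \<gamma>)) (Lprod p \<gamma> 1 j)"

lemma G_ub: "ub 1 (Gmat p \<gamma> j)"
  unfolding Gmat_def using ub_mult[OF ub_mult[OF Lprod_ub U_ub] Lprod_ub] by simp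

lemma G_s: "Gmat p \<gamma> j i (i+1) = 1"
proof -
  have u: "ub 1 (mmult (Lprod p \<gamma> (j+2) p) (Umat p \<gamma>))" using ub_mult[OF Lprod_ub U_ub] by simp
  show ?thesis unfolding Gmat_def
    using sd_right[OF u Lprod_ub] sd_left[OF Lprod_ub U_ub] by (simp add: Lprod_d U_s U_s[simplified])
qed

lemma G_lb: assumes "j < p" shows "lb (p-1) (Gmat p \<gamma> j)"
proof -
  have a: "lb (p+1-(j+2)) (Lprod p \<gamma> (j+2) p)" "lb (j+1-1) (Lprod p \<gamma> 1 j)"
    using Lprod_props by blast+
  have "lb (p+1-(j+2) + 0) (mmult (Lprod p \<gamma> (j+2) p) (Umat p \<gamma>))"
    by (rule lb_mult[OF Lprod_ub a(1) U_lb])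
  then have "lb (p+1-(j+2) + 0 + (j+1-1)) (Gmat p \<gamma> j)"
    unfolding Gmat_def by (rule lb_mult[OF ub_mult[OF Lprod_ub U_ub] _ a(2)])
  then show ?thesis by (rule lb_mono) (use assms in simp)
qed

lemma D_split1: assumes "j < p" shows "Dm p \<gamma> j = mmult (Lmat p \<gamma> (j+1)) (Gmat p \<gamma> j)"
proof -
  have "Dm p \<gamma> j = mmult (mmult (mmult (Lmat p \<gamma> (j+1)) (Lprod p \<gamma> (j+2) p)) (Umat p \<gamma>)) (Lprod p \<gamma> 1 j)"
    unfolding Dm_def using Lprod_cons[of "j+1" p p \<gamma>] assms by simp
  also have "\<dots> = mmult (mmult (Lmat p \<gamma> (j+1)) (mmult (Lprod p \<gamma> (j+2) p) (Umat p \<gamma>))) (Lprod p \<gamma> 1 j)"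
    by (simp add: mmult_assoc[OF L_ub Lprod_ub])
  also have "\<dots> = mmult (Lmat p \<gamma> (j+1)) (Gmat p \<gamma> j)"
    unfolding Gmat_def by (rule mmult_assoc[OF L_ub ub_mult[OF Lprod_ub U_ub]])
  finally show ?thesis .
qed

lemma D_split2: "Dm p \<gamma> (j+1) = mmult (Gmat p \<gamma> j) (Lmat p \<gamma> (j+1))"
proof -
  have "Dm p \<gamma> (j+1) = mmult (mmult (Lprod p \<gamma> (j+2) p) (Umat p \<gamma>)) (mmult (Lprod p \<gamma> 1 j) (Lmat p \<gamma> (j+1)))"
    unfolding Dm_def Lprod_snoc by (simp add: add.assoc)
  also have "\<dots> = mmult (Gmat p \<gamma> j) (Lmat p \<gamma> (j+1))"
    unfolding Gmat_def by (rule mmult_assoc[OF ub_mult[OF Lprod_ub U_ub] Lprod_ub, symmetric])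
  finally show ?thesis .
qed

lemma D_0: "Dm p \<gamma> 0 = mmult (Lprod p \<gamma> 1 p) (Umat p \<gamma>)"
  unfolding Dm_def by (simp add: Lprod_empty)

lemma D_p: "Dm p \<gamma> p = mmult (Umat p \<gamma>) (Lprod p \<gamma> 1 p)"
  unfolding Dm_def by (simp add: Lprod_empty)

lemma dtrans:
  assumes "darboux_factorization p J C \<gamma>" "j \<le> p"
  shows "darboux_trans p J C \<gamma> j = (\<lambda>i k. C * ident i k + Dm p \<gamma> j i k)"
proof (cases "j = 0")
  case True
  have "(\<lambda>i k. J i k - C * ident i k) = Dm p \<gamma> 0"
    using assms(1) by (simp add: darboux_factorization_def D_0)
  then have "\<And>i k. J i k - C * ident i k = Dm p \<gamma> 0 i k" by metis
  then show ?thesis using True by (auto simp: darboux_trans_def algebra_simps intro!: ext)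
next
  case False then show ?thesis by (simp add: darboux_trans_def Dm_def)
qed


lemma lin_add: "lin_functional M \<Longrightarrow> lin_functional M' \<Longrightarrow> lin_functional (\<lambda>q. M q + M' q)"
  by (auto simp: lin_functional_def algebra_simps)
lemma lin_diff: "lin_functional M \<Longrightarrow> lin_functional M' \<Longrightarrow> lin_functional (\<lambda>q. M q - M' q)"
  by (auto simp: lin_functional_def algebra_simps)
lemma lin_scale: "lin_functional M \<Longrightarrow> lin_functional (\<lambda>q. c * M q)"
  by (auto simp: lin_functional_def algebra_simps)
lemma lin_if0: "lin_functional M \<Longrightarrow> lin_functional (\<lambda>q. if b then 0 else M q)"
  by (auto simp: lin_functional_def)
lemma lin_sumf: "(\<And>s. s \<in> S \<Longrightarrow> lin_functional (F s)) \<Longrightarrow> lin_functional (\<lambda>q. \<Sum>s\<in>S. F s q)"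
proof (induct S rule: infinite_finite_induct)
  case (infinite A) then show ?case by (simp add: lin_functional_def)
next
  case empty then show ?case by (simp add: lin_functional_def)
next
  case (insert x F) then show ?case by (simp add: lin_add)
qed
lemma lin_shift: assumes "lin_functional M" shows "lin_functional (shift_fun C M)"
  unfolding lin_functional_def shift_fun_def
proof (intro conjI allI)
  fix p q :: "complex poly" and c
  show "M ([:-C, 1:] * (p + q)) = M ([:-C, 1:] * p) + M ([:-C, 1:] * q)"
    using assms by (simp only: distrib_left lin_functional_def)
  show "M ([:-C, 1:] * smult c p) = c * M ([:-C, 1:] * p)"
    using assms by (simp only: mult_smult_right lin_functional_def)
qed

lemma eval_comb: "lin_functional M \<Longrightarrow> M (\<Sum>l\<in>S. smult (c l) (Q l)) = (\<Sum>l\<in>S. c l * M (Q l))"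
  by (simp add: lin_sum) (simp add: lin_functional_def)

lemma sum_delta_mult: "finite S \<Longrightarrow> (\<Sum>l\<in>S. c l * (if l = n then 1 else 0)) = (if n \<in> S then c n else (0::complex))"
proof -
  assume f: "finite S"
  have "(\<Sum>l\<in>S. c l * (if l = n then 1 else 0)) = (\<Sum>l\<in>S. if l = n then c n else 0)"
    by (rule sum.cong) auto
  then show ?thesis using f by simp
qed

lemma eval_mv:
  assumes "lin_functional M" "\<And>l. M (Q l) = (if l = n then 1 else 0)"
  shows "M (mv b A Q k) = (if n \<le> k + b then A k n else 0)"
  unfolding mv_def using assms by (simp add: eval_comb sum_delta_mult)


theorem lemma3:
  fixes p :: nat and J :: imat and C :: complex and \<gamma> :: "nat \<Rightarrow> complex"
  assumes p1: "p \<ge> 1"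
    and superdiag: "\<forall>n. J n (n+1) = 1"
    and band: "\<forall>n m. (m > n + 1 \<or> m + p < n) \<longrightarrow> J n m = 0"
    and lowdiag: "\<forall>n. J (n+p) n \<noteq> 0"
    and PC: "\<forall>n\<ge>1. poly (hess_poly J n) C \<noteq> 0"
    and fact: "darboux_factorization p J C \<gamma>"
  defines "Ld \<equiv> \<lambda>j. dual_seq (hess_poly (darboux_trans p J C \<gamma> j))"
  shows "(\<forall>j<p. \<forall>n.
            Ld (j+1) n = (\<lambda>q. Ld j n q + \<gamma> (n*(p+1)+j+2) * Ld j (n+1) q) \<and>
            shift_fun C (Ld j n) =
              (\<lambda>q. (if n = 0 then 0 else Ld (j+1) (n-1) q)
                   + (\<Sum>s<p. Gmat p \<gamma> j (n+s) n * Ld (j+1) (n+s) q)))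
       \<and> (\<forall>n. shift_fun C (Ld 0 n) =
              (\<lambda>q. (if n = 0 then 0 else Ld p (n-1) q)
                   - poly (hess_poly J (n+1)) C / poly (hess_poly J n) C * Ld p n q))"
proof -
  define Pj where "Pj j = hess_poly (darboux_trans p J C \<gamma> j)" for j
  have bas: "basis (Pj j)" for j unfolding Pj_def by (rule basis_hess)
  have Ldl: "lin_functional (Ld j n)" for j n
    unfolding Ld_def using dual_props(1)[OF basis_hess] by simp
  have Ldd: "Ld j n (Pj j i) = (if i = n then 1 else 0)" for j n i
    unfolding Ld_def Pj_def using dual_props(2)[OF basis_hess] by simp
  have P0: "Pj 0 = hess_poly J" unfolding Pj_def by (simp add: darboux_trans_def)
  have part1: "Ld (j+1) n = (\<lambda>q. Ld j n q + \<gamma> (n*(p+1)+j+2) * Ld j (n+1) q) \<and>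
            shift_fun C (Ld j n) =
              (\<lambda>q. (if n = 0 then 0 else Ld (j+1) (n-1) q)
                   + (\<Sum>s<p. Gmat p \<gamma> j (n+s) n * Ld (j+1) (n+s) q))"
    if jp: "j < p" for j n
  proof -
    have A: "darboux_trans p J C \<gamma> j = (\<lambda>i k. C * ident i k + mmult (Lmat p \<gamma> (j+1)) (Gmat p \<gamma> j) i k)"
      using dtrans[OF fact, of j] jp D_split1[OF jp] by simp
    have B: "darboux_trans p J C \<gamma> (j+1) = (\<lambda>i k. C * ident i k + mmult (Gmat p \<gamma> j) (Lmat p \<gamma> (j+1)) i k)"
      using dtrans[OF fact, of "j+1"] jp D_split2 by simp
    note cr = core[OF L_ub allI[OF L_d] G_ub allI[OF G_s] A B]
    have c1: "Pj j = mv 0 (Lmat p \<gamma> (j+1)) (Pj (j+1))" using cr(1) unfolding Pj_def .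
    have c2: "[:-C,1:] * Pj (j+1) k = mv 1 (Gmat p \<gamma> j) (Pj j) k" for k
      using cr(2) unfolding Pj_def by blast
    have e1: "Ld (j+1) n = (\<lambda>q. Ld j n q + \<gamma> (n*(p+1)+j+2) * Ld j (n+1) q)"
    proof (rule lin_ext[OF bas[of j] Ldl lin_add[OF Ldl lin_scale[OF Ldl]]])
      fix m
      have "Ld (j+1) n (Pj j m) = (if n \<le> m then Lmat p \<gamma> (j+1) m n else 0)"
        unfolding c1 by (subst eval_mv[OF Ldl Ldd]) simp
      also have "\<dots> = Ld j n (Pj j m) + \<gamma> (n*(p+1)+j+2) * Ld j (n+1) (Pj j m)"
        unfolding Ldd by (auto simp: Lmat_def)
      finally show "Ld (j+1) n (Pj j m) = Ld j n (Pj j m) + \<gamma> (n*(p+1)+j+2) * Ld j (n+1) (Pj j m)" .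
    qed
    have e2: "shift_fun C (Ld j n) =
              (\<lambda>q. (if n = 0 then 0 else Ld (j+1) (n-1) q)
                   + (\<Sum>s<p. Gmat p \<gamma> j (n+s) n * Ld (j+1) (n+s) q))"
    proof (rule lin_ext[OF bas[of "j+1"] lin_shift[OF Ldl] lin_add[OF lin_if0[OF Ldl] lin_sumf[OF lin_scale[OF Ldl]]]])
      fix k
      have L: "shift_fun C (Ld j n) (Pj (j+1) k) = (if n \<le> k + 1 then Gmat p \<gamma> j k n else 0)"
        unfolding shift_fun_def c2 by (rule eval_mv[OF Ldl Ldd])
      have S: "(\<Sum>s<p. Gmat p \<gamma> j (n+s) n * Ld (j+1) (n+s) (Pj (j+1) k)) =
               (if n \<le> k \<and> k < n + p then Gmat p \<gamma> j k n else 0)"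
      proof (cases "n \<le> k")
        case True
        have "(\<Sum>s<p. Gmat p \<gamma> j (n+s) n * Ld (j+1) (n+s) (Pj (j+1) k)) =
              (\<Sum>s<p. if s = k - n then Gmat p \<gamma> j k n else 0)"
          unfolding Ldd by (rule sum.cong) (use True in auto)
        then show ?thesis using True by auto
      next
        case False
        then show ?thesis unfolding Ldd by (auto intro!: sum.neutral)
      qed
      have Gz: "Gmat p \<gamma> j k n = 0" if "n + p \<le> k"
        using G_lb[OF jp] that jp unfolding lb_def by auto
      have Gs: "Gmat p \<gamma> j (n-1) n = 1" if "n \<noteq> 0"
        using G_s[of p \<gamma> j "n-1"] that by simp
      show "shift_fun C (Ld j n) (Pj (j+1) k) =
            (if n = 0 then 0 else Ld (j+1) (n-1) (Pj (j+1) k))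
                   + (\<Sum>s<p. Gmat p \<gamma> j (n+s) n * Ld (j+1) (n+s) (Pj (j+1) k))"
      proof -
        have R: "(if n = 0 then 0 else Ld (j+1) (n-1) (Pj (j+1) k))
                   + (\<Sum>s<p. Gmat p \<gamma> j (n+s) n * Ld (j+1) (n+s) (Pj (j+1) k))
               = (if n = 0 then 0 else (if k = n-1 then 1 else 0)) + (if n \<le> k \<and> k < n + p then Gmat p \<gamma> j k n else 0)"
          by (simp only: S) (simp only: Ldd)
        show ?thesis unfolding R L using Gz Gs by (cases "k + 1 = n") auto
      qed
    qed
    show ?thesis using e1 e2 by blast
  qed
  have part2: "shift_fun C (Ld 0 n) =
              (\<lambda>q. (if n = 0 then 0 else Ld p (n-1) q)
                   - poly (hess_poly J (n+1)) C / poly (hess_poly J n) C * Ld p n q)" for n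
  proof -
    have A: "darboux_trans p J C \<gamma> 0 = (\<lambda>i k. C * ident i k + mmult (Lprod p \<gamma> 1 p) (Umat p \<gamma>) i k)"
      using dtrans[OF fact, of 0] D_0 by simp
    have B: "darboux_trans p J C \<gamma> p = (\<lambda>i k. C * ident i k + mmult (Umat p \<gamma>) (Lprod p \<gamma> 1 p) i k)"
      using dtrans[OF fact, of p] D_p by simp
    note cr = core[OF Lprod_ub allI[OF Lprod_d] U_ub allI[OF U_s] A B]
    have c2: "[:-C,1:] * Pj p k = mv 1 (Umat p \<gamma>) (Pj 0) k" for k
      using cr(2) unfolding Pj_def by blast
    have mvU: "mv 1 (Umat p \<gamma>) Q k = smult (\<gamma> (k*(p+1)+1)) (Q k) + Q (k+1)" for Q :: "nat \<Rightarrow> complex poly" and k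
    proof -
      have "mv 1 (Umat p \<gamma>) Q k = (\<Sum>m\<le>k. smult (Umat p \<gamma> k m) (Q m)) + Q (k+1)"
        unfolding mv_def by (simp add: Umat_def)
      also have "(\<Sum>m\<le>k. smult (Umat p \<gamma> k m) (Q m)) = (\<Sum>m\<le>k. if m = k then smult (\<gamma> (k*(p+1)+1)) (Q k) else 0)"
        by (rule sum.cong) (auto simp: Umat_def)
      finally show ?thesis by simp
    qed
    have gam: "\<gamma> (k*(p+1)+1) = - poly (hess_poly J (k+1)) C / poly (hess_poly J k) C" for k
    proof -
      have "poly ([:-C,1:] * Pj p k) C = 0" by simp
      then have "poly (mv 1 (Umat p \<gamma>) (Pj 0) k) C = 0" by (simp only: c2)
      then have "poly (smult (\<gamma> (k*(p+1)+1)) (Pj 0 k) + Pj 0 (k+1)) C = 0" by (simp only: mvU)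
      then have "\<gamma> (k*(p+1)+1) * poly (hess_poly J k) C + poly (hess_poly J (k+1)) C = 0"
        by (simp only: P0 poly_add poly_smult)
      moreover have "poly (hess_poly J k) C \<noteq> 0"
        using PC by (cases k) (auto simp: hess_poly_0)
      ultimately show ?thesis by (simp add: field_simps eq_neg_iff_add_eq_0)
    qed
    show ?thesis
    proof (rule lin_ext[OF bas[of p] lin_shift[OF Ldl] lin_diff[OF lin_if0[OF Ldl] lin_scale[OF Ldl]]])
      fix k
      have L: "shift_fun C (Ld 0 n) (Pj p k) = (if n \<le> k + 1 then Umat p \<gamma> k n else 0)"
        unfolding shift_fun_def c2 by (rule eval_mv[OF Ldl Ldd])
      show "shift_fun C (Ld 0 n) (Pj p k) =
             (if n = 0 then 0 else Ld p (n-1) (Pj p k))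
                   - poly (hess_poly J (n+1)) C / poly (hess_poly J n) C * Ld p n (Pj p k)"
        unfolding L Ldd using gam[of n] by (cases "k + 1 = n") (auto simp: Umat_def)
    qed
  qed
  show ?thesis using part1 part2 by blast
qed

end
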